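(* Let $S$ be an inverse semigroup. Then every inverse subsemigroup of $S\times S$ containing the diagonal $\{(s,s)\colon s\in S\}$ is a congruence on $S$ if and only if $S$ is a group.
   Context: An inverse semigroup is a semigroup in which every element $s$ has a unique inverse $s^{-1}$, i.e. unique $t$ with $sts=s$, $tst=t$; an inverse subsemigroup is a subsemigroup closed under taking inverses ($S\times S$ is inverse with componentwise inverses). A congruence on $S$ is an equivalence relation on $S$ which is a subsemigroup of $S\times S$. *)

theory Defs
  imports Main
begin

definition is_inv :: "'a::semigroup_mult \<Rightarrow> 'a \<Rightarrow> bool" where
  "is_inv s t \<longleftrightarrow> s * t * s = s \<and> t * s * t = t"

definition inverse_semigroup :: "'a::semigroup_mult set \<Rightarrow> bool" where
  "inverse_semigroup S \<longleftrightarrow> (\<forall>x\<in>S. \<forall>y\<in>S. x * y \<in> S) \<and> (\<forall>s\<in>S. \<exists>!t. t \<in> S \<and> is_inv s t)"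

definition sinv :: "'a::semigroup_mult set \<Rightarrow> 'a \<Rightarrow> 'a" where
  "sinv S s = (THE t. t \<in> S \<and> is_inv s t)"

definition subsemigroup2 :: "'a::semigroup_mult set \<Rightarrow> ('a \<times> 'a) set \<Rightarrow> bool" where
  "subsemigroup2 S R \<longleftrightarrow> R \<subseteq> S \<times> S \<and>
     (\<forall>a b c d. (a, b) \<in> R \<longrightarrow> (c, d) \<in> R \<longrightarrow> (a * c, b * d) \<in> R)"

definition inverse_subsemigroup2 :: "'a::semigroup_mult set \<Rightarrow> ('a \<times> 'a) set \<Rightarrow> bool" where
  "inverse_subsemigroup2 S R \<longleftrightarrow> subsemigroup2 S R \<and>
     (\<forall>a b. (a, b) \<in> R \<longrightarrow> (sinv S a, sinv S b) \<in> R)"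

definition semigroup_congruence :: "'a::semigroup_mult set \<Rightarrow> ('a \<times> 'a) set \<Rightarrow> bool" where
  "semigroup_congruence S R \<longleftrightarrow> equiv S R \<and> subsemigroup2 S R"

definition is_group :: "'a::semigroup_mult set \<Rightarrow> bool" where
  "is_group S \<longleftrightarrow> (\<forall>x\<in>S. \<forall>y\<in>S. x * y \<in> S) \<and>
     (\<exists>e\<in>S. (\<forall>x\<in>S. e * x = x \<and> x * e = x) \<and> (\<forall>x\<in>S. \<exists>y\<in>S. x * y = e \<and> y * x = e))"

end

theory Submission
  imports Defs
begin

lemma idA: "(e::'a::semigroup_mult) * e = e \<Longrightarrow> e * (e * z) = e * z"
  by (metis mult.assoc)

locale invs =
  fixes S :: "'a::semigroup_mult set"
  assumes inv: "inverse_semigroup S"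
begin

lemma cl: "x \<in> S \<Longrightarrow> y \<in> S \<Longrightarrow> x * y \<in> S"
  using inv unfolding inverse_semigroup_def by blast

lemma sinv: "s \<in> S \<Longrightarrow> sinv S s \<in> S \<and> is_inv s (sinv S s)"
  using inv unfolding inverse_semigroup_def sinv_def by (metis (no_types, lifting) theI')

lemma uniq: "s \<in> S \<Longrightarrow> t \<in> S \<Longrightarrow> is_inv s t \<Longrightarrow> sinv S s = t"
  using inv sinv unfolding inverse_semigroup_def by blast

lemma sinv1: "s \<in> S \<Longrightarrow> s * (sinv S s * s) = s"
  using sinv unfolding is_inv_def by (metis mult.assoc)
lemma sinv1': "s \<in> S \<Longrightarrow> s * (sinv S s * (s * z)) = s * z"
  using sinv1 by (metis mult.assoc)
lemma sinv2: "s \<in> S \<Longrightarrow> sinv S s * (s * sinv S s) = sinv S s"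
  using sinv unfolding is_inv_def by (metis mult.assoc)
lemma sinv2': "s \<in> S \<Longrightarrow> sinv S s * (s * (sinv S s * z)) = sinv S s * z"
  using sinv2 by (metis mult.assoc)

lemma idem_prod:
  assumes e: "e \<in> S" "e * e = e" and f: "f \<in> S" "f * f = f"
  shows "e * f * (e * f) = e * f"
proof -
  have ef: "e * f \<in> S" using e f cl by auto
  define x where "x = sinv S (e * f)"
  have x: "x \<in> S" "e * (f * (x * (e * f))) = e * f" "x * (e * (f * x)) = x"
    using sinv[OF ef] unfolding x_def is_inv_def by (auto simp: mult.assoc)
  have x3: "\<And>z. x * (e * (f * (x * z))) = x * z" using x(3) by (metis mult.assoc)
  have yS: "f * x * e \<in> S" using cl x f e by auto
  have "is_inv (e * f) (f * x * e)"
    unfolding is_inv_def using x x3 e f idA[of e] idA[of f]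
    by (simp add: mult.assoc)
  then have xy: "x = f * x * e" using uniq[OF ef yS] x_def by simp
  have xx: "x * x = x"
  proof -
    have "x * x = f * (x * (e * (f * x))) * e" using xy by (metis mult.assoc)
    also have "\<dots> = x" using x xy by simp
    finally show ?thesis .
  qed
  have "is_inv x x" unfolding is_inv_def using xx by simp
  then have "sinv S x = x" using uniq x by simp
  moreover have "is_inv x (e * f)" using sinv[OF ef] x_def unfolding is_inv_def by simp
  then have "sinv S x = e * f" using uniq x ef by simp
  ultimately have "x = e * f" by simp
  then show ?thesis using xx by simp
qed

lemma idem_comm:
  assumes e: "e \<in> S" "e * e = e" and f: "f \<in> S" "f * f = f"
  shows "e * f = f * e"
proof -
  have ef: "e * f \<in> S" "f * e \<in> S" using e f cl by auto
  have i1: "e * f * (e * f) = e * f" using idem_prod e f by blast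
  have i2: "f * e * (f * e) = f * e" using idem_prod e f by blast
  have "is_inv (e * f) (e * f)" unfolding is_inv_def using i1 by simp
  then have a: "sinv S (e * f) = e * f" using uniq ef by simp
  have "is_inv (e * f) (f * e)" unfolding is_inv_def
    using i1 i2 e f idA[of e] idA[of f] by (simp add: mult.assoc)
  then have "sinv S (e * f) = f * e" using uniq ef by simp
  with a show ?thesis by simp
qed


lemma idem_sinv1: "a \<in> S \<Longrightarrow> a * sinv S a * (a * sinv S a) = a * sinv S a"
  using sinv1' by (simp add: mult.assoc)
lemma idem_sinv2: "a \<in> S \<Longrightarrow> sinv S a * a * (sinv S a * a) = sinv S a * a"
  using sinv2' by (simp add: mult.assoc)

lemma group_dir:
  assumes G: "is_group S" and R: "inverse_subsemigroup2 S R" and D: "Id_on S \<subseteq> R"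
  shows "semigroup_congruence S R"
proof -
  obtain e where e: "e \<in> S" "\<And>x. x \<in> S \<Longrightarrow> e * x = x \<and> x * e = x"
    and iv: "\<And>x. x \<in> S \<Longrightarrow> \<exists>y\<in>S. x * y = e \<and> y * x = e"
    using G unfolding is_group_def by metis
  have si: "x \<in> S \<Longrightarrow> x * sinv S x = e \<and> sinv S x * x = e" for x
  proof -
    assume x: "x \<in> S"
    obtain y where y: "y \<in> S" "x * y = e" "y * x = e" using iv[OF x] by blast
    have "is_inv x y" unfolding is_inv_def using y e x by simp
    then have "sinv S x = y" using uniq x y by simp
    then show ?thesis using y by simp
  qed
  have sub: "R \<subseteq> S \<times> S" and mul: "\<And>a b c d. (a, b) \<in> R \<Longrightarrow> (c, d) \<in> R \<Longrightarrow> (a * c, b * d) \<in> R"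
    and inR: "\<And>a b. (a, b) \<in> R \<Longrightarrow> (sinv S a, sinv S b) \<in> R"
    using R unfolding inverse_subsemigroup2_def subsemigroup2_def by blast+
  have dg: "x \<in> S \<Longrightarrow> (x, x) \<in> R" for x using D by auto
  have "sym R"
  proof (rule symI)
    fix a b assume ab: "(a, b) \<in> R"
    then have ab': "a \<in> S" "b \<in> S" using sub by auto
    have "(b * sinv S a * a, b * sinv S b * a) \<in> R"
      using mul[OF mul[OF dg[OF ab'(2)] inR[OF ab]] dg[OF ab'(1)]] .
    then show "(b, a) \<in> R" using si ab' e by (simp add: mult.assoc)
  qed
  moreover have "trans R"
  proof (rule transI)
    fix a b c assume ab: "(a, b) \<in> R" and bc: "(b, c) \<in> R"
    then have ab': "a \<in> S" "b \<in> S" "c \<in> S" using sub by auto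
    have "(a * sinv S b * b, b * sinv S b * c) \<in> R"
      using mul[OF mul[OF ab dg[OF sinv[OF ab'(2), THEN conjunct1]]] bc] .
    then show "(a, c) \<in> R" using si ab' e by (simp add: mult.assoc)
  qed
  moreover have "refl_on S R" using sub D unfolding refl_on_def by auto
  ultimately show ?thesis using R sub
    unfolding semigroup_congruence_def equiv_def inverse_subsemigroup2_def by blast
qed

definition NO :: "('a \<times> 'a) set" where
  "NO = {(a, b). a \<in> S \<and> b \<in> S \<and> (\<exists>g\<in>S. g * g = g \<and> a = g * b)}"

lemma NO_diag: "Id_on S \<subseteq> NO"
proof
  fix p assume "p \<in> Id_on S"
  then obtain b where b: "b \<in> S" "p = (b, b)" by auto
  have "b * sinv S b \<in> S" using cl sinv b by blast
  moreover have "b = b * sinv S b * b" using sinv1 b by (simp add: mult.assoc)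
  ultimately show "p \<in> NO" unfolding NO_def using b idem_sinv1[OF b(1)] by blast
qed

lemma NO_mul:
  assumes ab: "(a, b) \<in> NO" and cd: "(c, d) \<in> NO"
  shows "(a * c, b * d) \<in> NO"
proof -
  obtain g where g: "g \<in> S" "g * g = g" "a = g * b" "a \<in> S" "b \<in> S" using ab unfolding NO_def by blast
  obtain h where h: "h \<in> S" "h * h = h" "c = h * d" "c \<in> S" "d \<in> S" using cd unfolding NO_def by blast
  define b' where "b' = sinv S b"
  have b': "b' \<in> S" "b * (b' * b) = b" using sinv sinv1 g unfolding b'_def by auto
  have bb: "b' * b \<in> S" "b' * b * (b' * b) = b' * b" using cl b' g idem_sinv2 unfolding b'_def by auto
  have com: "h * (b' * b) = b' * b * h" using idem_comm[OF h(1,2) bb] .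
  define m where "m = b * h * b'"
  have mS: "m \<in> S" unfolding m_def using cl b' g h by auto
  have mb: "m * b = b * h"
  proof -
    have "m * b = b * (h * (b' * b))" unfolding m_def by (simp add: mult.assoc)
    also have "\<dots> = b * (b' * b) * h" using com by (simp add: mult.assoc)
    also have "\<dots> = b * h" using b' by simp
    finally show ?thesis .
  qed
  have mm: "m * m = m"
  proof -
    have "m * m = (m * b) * h * b'" unfolding m_def by (simp add: mult.assoc)
    also have "\<dots> = b * (h * h) * b'" using mb by (simp add: mult.assoc)
    also have "\<dots> = m" using h unfolding m_def by simp
    finally show ?thesis .
  qed
  define k where "k = g * m"
  have kS: "k \<in> S" unfolding k_def using cl g mS by auto
  have kk: "k * k = k" unfolding k_def using idem_prod g mS mm by auto
  have "a * c = k * (b * d)"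
  proof -
    have "k * (b * d) = g * (m * b) * d" unfolding k_def by (simp add: mult.assoc)
    also have "\<dots> = a * c" using mb g h by (simp add: mult.assoc)
    finally show ?thesis by simp
  qed
  then show ?thesis unfolding NO_def using kS kk cl g h by blast
qed

lemma NO_sinv:
  assumes ab: "(a, b) \<in> NO"
  shows "(sinv S a, sinv S b) \<in> NO"
proof -
  obtain g where g: "g \<in> S" "g * g = g" "a = g * b" "a \<in> S" "b \<in> S" using ab unfolding NO_def by blast
  define b' where "b' = sinv S b"
  have b': "b' \<in> S" "b * (b' * b) = b" "b' * (b * b') = b'" using sinv sinv1 sinv2 g unfolding b'_def by auto
  have bb: "b * b' \<in> S" "b * b' * (b * b') = b * b'" using cl b' g idem_sinv1 unfolding b'_def by auto
  have com: "g * (b * b') = b * b' * g" using idem_comm[OF g(1,2) bb] .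
  have inv1: "g * b * (b' * g) * (g * b) = g * b"
  proof -
    have "g * b * (b' * g) * (g * b) = g * (b * b' * g) * b" using idA[of g, OF g(2)] by (simp add: mult.assoc)
    also have "\<dots> = g * g * (b * b') * b" using com by (simp add: mult.assoc)
    also have "\<dots> = g * b" using g(2) b' by (simp add: mult.assoc)
    finally show ?thesis .
  qed
  have inv2: "b' * g * (g * b) * (b' * g) = b' * g"
  proof -
    have "b' * g * (g * b) * (b' * g) = b' * (g * (b * b')) * g" using idA[of g, OF g(2)] by (simp add: mult.assoc)
    also have "\<dots> = b' * (b * b') * g * g" using com by (simp add: mult.assoc)
    also have "\<dots> = b' * g" using g(2) b' by (simp add: mult.assoc)
    finally show ?thesis .
  qed
  have "is_inv a (b' * g)" unfolding is_inv_def using inv1 inv2 g(3) by simp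
  then have sa: "sinv S a = b' * g" using uniq g b' cl by auto
  define k where "k = b' * g * b"
  have kS: "k \<in> S" unfolding k_def using cl g b' by auto
  have kb: "k * b' = b' * g"
  proof -
    have "k * b' = b' * (g * (b * b'))" unfolding k_def by (simp add: mult.assoc)
    also have "\<dots> = b' * (b * b') * g" using com by (simp add: mult.assoc)
    also have "\<dots> = b' * g" using b' by simp
    finally show ?thesis .
  qed
  have kk: "k * k = k"
  proof -
    have "k * k = (k * b') * g * b" unfolding k_def by (simp add: mult.assoc)
    also have "\<dots> = b' * (g * g) * b" using kb by (simp add: mult.assoc)
    also have "\<dots> = k" using g unfolding k_def by simp
    finally show ?thesis .
  qed
  have "sinv S a \<in> S" using sinv g by auto
  moreover have "sinv S a = k * sinv S b" using sa kb unfolding b'_def by simp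
  ultimately show ?thesis unfolding NO_def using kS kk b'(1) unfolding b'_def by blast
qed

lemma NO_inv: "inverse_subsemigroup2 S NO"
proof -
  have "NO \<subseteq> S \<times> S" unfolding NO_def by auto
  then show ?thesis unfolding inverse_subsemigroup2_def subsemigroup2_def
    using NO_mul NO_sinv by blast
qed

lemma one_idem:
  assumes sy: "sym NO" and e: "e \<in> S" "e * e = e" and f: "f \<in> S" "f * f = f"
  shows "e = f"
proof -
  have A: "x * y = y" if x: "x \<in> S" "x * x = x" and y: "y \<in> S" "y * y = y" for x y
  proof -
    have xyS: "x * y \<in> S" using cl x y by blast
    have "(x * y, y) \<in> NO" unfolding NO_def using x(1,2) y(1) xyS by auto
    then have "(y, x * y) \<in> NO" by (rule symD[OF sy])
    then have "\<exists>g\<in>S. g * g = g \<and> y = g * (x * y)" unfolding NO_def by simp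
    then obtain g where g: "g \<in> S" "g * g = g" "y = g * (x * y)" by blast
    have "x * y = x * (g * (x * y))" using g(3) by metis
    also have "\<dots> = x * g * (x * y)" by (simp add: mult.assoc)
    also have "\<dots> = g * x * (x * y)" using idem_comm g x by simp
    also have "\<dots> = g * (x * (x * y))" by (simp add: mult.assoc)
    also have "\<dots> = g * (x * y)" using idA[of x, OF x(2)] by simp
    finally show "x * y = y" using g(3) by (rule trans[OF _ sym])
  qed
  have "e * f = f" using A e f by blast
  moreover have "f * e = e" using A e f by blast
  ultimately show ?thesis using idem_comm e f by simp
qed

lemma cong_dir:
  assumes ne: "S \<noteq> {}" and C: "semigroup_congruence S NO"
  shows "is_group S"
proof -
  have sy: "sym NO" using C unfolding semigroup_congruence_def equiv_def by blast
  obtain s where s: "s \<in> S" using ne by blast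
  define e where "e = s * sinv S s"
  have eS: "e \<in> S" unfolding e_def using cl sinv s by blast
  have ee: "e * e = e" unfolding e_def using idem_sinv1 s by blast
  have E1: "x * sinv S x = e" if x: "x \<in> S" for x
    using one_idem[OF sy _ idem_sinv1[OF x] eS ee] cl sinv x by blast
  have E2: "sinv S x * x = e" if x: "x \<in> S" for x
    using one_idem[OF sy _ idem_sinv2[OF x] eS ee] cl sinv x by blast
  have "\<forall>x\<in>S. e * x = x \<and> x * e = x"
  proof
    fix x assume x: "x \<in> S"
    have "e * x = x" using E1[OF x] sinv1[OF x] by (metis mult.assoc)
    moreover have "x * e = x" using E2[OF x] sinv1[OF x] by (metis mult.assoc)
    ultimately show "e * x = x \<and> x * e = x" by simp
  qed
  moreover have "\<forall>x\<in>S. \<exists>y\<in>S. x * y = e \<and> y * x = e"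
    using E1 E2 sinv by blast
  ultimately show ?thesis unfolding is_group_def using cl eS by blast
qed

end

theorem mainTheorem9:
  fixes S :: "'a::semigroup_mult set"
  assumes "inverse_semigroup S" and "S \<noteq> {}"
  shows "(\<forall>R. inverse_subsemigroup2 S R \<and> Id_on S \<subseteq> R \<longrightarrow> semigroup_congruence S R)
         \<longleftrightarrow> is_group S"
proof -
  interpret invs S using assms(1) by unfold_locales
  show ?thesis
  proof
    assume H: "\<forall>R. inverse_subsemigroup2 S R \<and> Id_on S \<subseteq> R \<longrightarrow> semigroup_congruence S R"
    show "is_group S" using cong_dir[OF assms(2)] H NO_inv NO_diag by blast
  next
    assume "is_group S"
    then show "\<forall>R. inverse_subsemigroup2 S R \<and> Id_on S \<subseteq> R \<longrightarrow> semigroup_congruence S R"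
      using group_dir by blast
  qed
qed

end
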